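(* Let $R$ be a Noetherian domain of prime characteristic $p>0$, and let $S\supseteq R$ be a domain that is finitely generated as an $R$-module. If tight closure commutes with localization in $S$, then tight closure commutes with localization in $R$.
   Context: All rings are commutative and Noetherian of prime characteristic $p>0$. For an ideal $I$ of a ring $A$ and $q=p^e$, $I^{[q]}$ denotes the ideal generated by $\{x^q : x\in I\}$. The tight closure $I^*$ of $I$ is the set of $z\in A$ for which there exists $c\in A$, not in any minimal prime of $A$, with $c z^q\in I^{[q]}$ for all $q=p^e \gg 0$. We say tight closure commutes with localization in $A$ if for every ideal $I$ of $A$ and every multiplicative system $U\subseteq A$, one has $I^*A[U^{-1}] = (IA[U^{-1}])^*$, where the right side is the tight closure in the ring $A[U^{-1}]$. *)

theory Defs
  imports "HOL-Computational_Algebra.Primes"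
begin

text \<open>Rings are modelled as subrings of an ambient field 'k. Every domain embeds in
its fraction field, and a localization A[U^-1] of a domain A (with 0 not in U) is
the subring of the field consisting of fractions a/u.\<close>

definition subring :: "'k::field set \<Rightarrow> bool" where
  "subring A \<longleftrightarrow> 0 \<in> A \<and> 1 \<in> A \<and> (\<forall>x\<in>A. \<forall>y\<in>A. x + y \<in> A \<and> x - y \<in> A \<and> x * y \<in> A)"

definition ideal_of :: "'k::field set \<Rightarrow> 'k set \<Rightarrow> bool" where
  "ideal_of A I \<longleftrightarrow> I \<subseteq> A \<and> 0 \<in> I \<and> (\<forall>x\<in>I. \<forall>y\<in>I. x + y \<in> I) \<and>
     (\<forall>a\<in>A. \<forall>x\<in>I. a * x \<in> I)"

definition gen_ideal :: "'k::field set \<Rightarrow> 'k set \<Rightarrow> 'k set" where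
  "gen_ideal A X = \<Inter>{I. ideal_of A I \<and> X \<subseteq> I}"

definition noetherian :: "'k::field set \<Rightarrow> bool" where
  "noetherian A \<longleftrightarrow> (\<forall>I. ideal_of A I \<longrightarrow> (\<exists>F. finite F \<and> F \<subseteq> I \<and> I = gen_ideal A F))"

definition prime_ideal :: "'k::field set \<Rightarrow> 'k set \<Rightarrow> bool" where
  "prime_ideal A P \<longleftrightarrow> ideal_of A P \<and> P \<noteq> A \<and>
     (\<forall>a\<in>A. \<forall>b\<in>A. a * b \<in> P \<longrightarrow> a \<in> P \<or> b \<in> P)"

definition minimal_prime :: "'k::field set \<Rightarrow> 'k set \<Rightarrow> bool" where
  "minimal_prime A P \<longleftrightarrow> prime_ideal A P \<and> (\<forall>Q. prime_ideal A Q \<and> Q \<subseteq> P \<longrightarrow> Q = P)"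

definition frob_power :: "'k::field set \<Rightarrow> nat \<Rightarrow> 'k set \<Rightarrow> 'k set" where
  "frob_power A q I = gen_ideal A ((\<lambda>x. x ^ q) ` I)"

definition tight_closure :: "'k::field set \<Rightarrow> nat \<Rightarrow> 'k set \<Rightarrow> 'k set" where
  "tight_closure A p I = {z \<in> A. \<exists>c\<in>A. (\<forall>P. minimal_prime A P \<longrightarrow> c \<notin> P) \<and>
      (\<exists>e0. \<forall>e\<ge>e0. c * z ^ (p ^ e) \<in> frob_power A (p ^ e) I)}"

definition mult_system :: "'k::field set \<Rightarrow> 'k set \<Rightarrow> bool" where
  "mult_system A U \<longleftrightarrow> U \<subseteq> A \<and> 1 \<in> U \<and> (\<forall>u\<in>U. \<forall>v\<in>U. u * v \<in> U)"

definition localize :: "'k::field set \<Rightarrow> 'k set \<Rightarrow> 'k set" where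
  "localize A U = {a / u | a u. a \<in> A \<and> u \<in> U}"

text \<open>Tight closure commutes with localization in A (multiplicative systems not
containing 0; if 0 is in U both sides live in the zero ring and agree trivially).\<close>
definition tc_commutes_loc :: "'k::field set \<Rightarrow> nat \<Rightarrow> bool" where
  "tc_commutes_loc A p \<longleftrightarrow> (\<forall>I U. ideal_of A I \<and> mult_system A U \<and> 0 \<notin> U \<longrightarrow>
     gen_ideal (localize A U) (tight_closure A p I) =
     tight_closure (localize A U) p (gen_ideal (localize A U) I))"

definition finite_module_over :: "'k::field set \<Rightarrow> 'k set \<Rightarrow> bool" where
  "finite_module_over R S \<longleftrightarrow> (\<exists>F. finite F \<and> F \<subseteq> S \<and>
     S = {\<Sum>f\<in>F. r f * f | r. \<forall>f\<in>F. r f \<in> R})"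

end

theory Submission
  imports Defs
begin


lemma subring_power: "subring A \<Longrightarrow> x \<in> A \<Longrightarrow> x ^ n \<in> A"
  by (induction n) (auto simp: subring_def)

lemma ideal_of_self: "subring A \<Longrightarrow> ideal_of A A"
  by (auto simp: subring_def ideal_of_def)

lemma ideal_ofI:
  assumes "I \<subseteq> A" "0 \<in> I" "\<And>x y. x \<in> I \<Longrightarrow> y \<in> I \<Longrightarrow> x + y \<in> I"
    "\<And>a x. a \<in> A \<Longrightarrow> x \<in> I \<Longrightarrow> a * x \<in> I"
  shows "ideal_of A I"
  using assms unfolding ideal_of_def by blast

lemma gen_ideal_ideal:
  assumes "subring A" "X \<subseteq> A" shows "ideal_of A (gen_ideal A X)"
proof -
  let ?C = "{I. ideal_of A I \<and> X \<subseteq> I}"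
  have AC: "A \<in> ?C" using ideal_of_self[OF assms(1)] assms(2) by simp
  show ?thesis unfolding gen_ideal_def
  proof (rule ideal_ofI)
    show "\<Inter>?C \<subseteq> A" using AC by blast
    show "0 \<in> \<Inter>?C" by (auto simp: ideal_of_def)
  next
    fix x y assume "x \<in> \<Inter>?C" "y \<in> \<Inter>?C"
    then show "x + y \<in> \<Inter>?C" by (auto simp: ideal_of_def)
  next
    fix a x assume "a \<in> A" "x \<in> \<Inter>?C"
    then show "a * x \<in> \<Inter>?C" by (auto simp: ideal_of_def)
  qed
qed

lemma gen_ideal_sup: "X \<subseteq> gen_ideal A X"
  unfolding gen_ideal_def by blast

lemma gen_ideal_min: "ideal_of A J \<Longrightarrow> X \<subseteq> J \<Longrightarrow> gen_ideal A X \<subseteq> J"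
  unfolding gen_ideal_def by blast

lemma gen_ideal_of_ideal: "ideal_of A J \<Longrightarrow> gen_ideal A J = J"
  using gen_ideal_min gen_ideal_sup by blast

lemma gen_ideal_mono2:
  assumes "subring A" "subring B" "A \<subseteq> B" "X \<subseteq> A" "X \<subseteq> Y" "Y \<subseteq> B"
  shows "gen_ideal A X \<subseteq> gen_ideal B Y"
proof -
  have i: "ideal_of B (gen_ideal B Y)" using gen_ideal_ideal assms by blast
  have "ideal_of A (gen_ideal B Y \<inter> A)"
    using i assms(1,3) unfolding ideal_of_def subring_def by blast
  moreover have "X \<subseteq> gen_ideal B Y \<inter> A" using gen_ideal_sup assms by blast
  ultimately show ?thesis using gen_ideal_min by blast
qed

lemma prime_zero: "subring A \<Longrightarrow> prime_ideal A {0}"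
  unfolding prime_ideal_def ideal_of_def subring_def by auto

lemma ideal_zero: "ideal_of A P \<Longrightarrow> 0 \<in> P"
  unfolding ideal_of_def by blast

lemma minimal_prime_iff: "subring A \<Longrightarrow> minimal_prime A P \<longleftrightarrow> P = {0}"
proof
  assume A: "subring A" "minimal_prime A P"
  hence "prime_ideal A P" unfolding minimal_prime_def by blast
  hence "{0} \<subseteq> P" using ideal_zero unfolding prime_ideal_def by blast
  then show "P = {0}" using A prime_zero[OF A(1)] unfolding minimal_prime_def by blast
next
  assume A: "subring A" "P = {0}"
  show "minimal_prime A P" unfolding minimal_prime_def
  proof (intro conjI allI impI)
    show "prime_ideal A P" using A prime_zero by simp
    fix Q assume "prime_ideal A Q \<and> Q \<subseteq> P"
    then show "Q = P" using A ideal_zero unfolding prime_ideal_def by blast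
  qed
qed

lemma tc_alt: "subring A \<Longrightarrow> tight_closure A p I = {z \<in> A. \<exists>c\<in>A. c \<noteq> 0 \<and>
      (\<exists>e0. \<forall>e\<ge>e0. c * z ^ (p ^ e) \<in> frob_power A (p ^ e) I)}"
  unfolding tight_closure_def using minimal_prime_iff by blast




lemma frob_pow_dream:
  fixes x y :: "'k::field"
  assumes "prime CHAR('k)" shows "(x + y) ^ (CHAR('k) ^ e) = x ^ (CHAR('k) ^ e) + y ^ (CHAR('k) ^ e)"
  using freshmans_dream'[OF assms refl] .

lemma frob_gen:
  fixes A I :: "'k::field set"
  assumes "subring A" "I \<subseteq> A" "prime CHAR('k)" "q = CHAR('k) ^ e"
  shows "frob_power A q (gen_ideal A I) \<subseteq> gen_ideal A ((\<lambda>x. x ^ q) ` I)"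
proof -
  let ?J = "gen_ideal A ((\<lambda>x. x ^ q) ` I)"
  have JA: "(\<lambda>x. x ^ q) ` I \<subseteq> A" using assms(1,2) subring_power by blast
  have iJ: "ideal_of A ?J" using gen_ideal_ideal[OF assms(1) JA] .
  have qpos: "q > 0" using assms(3,4) prime_gt_0_nat by simp
  let ?K = "{x \<in> A. x ^ q \<in> ?J}"
  have "ideal_of A ?K"
    unfolding ideal_of_def
  proof (intro conjI ballI)
    show "?K \<subseteq> A" by blast
    show "0 \<in> ?K" using qpos ideal_zero[OF iJ] assms(1) by (simp add: subring_def power_0_left)
  next
    fix x y assume "x \<in> ?K" "y \<in> ?K"
    hence xy: "x + y \<in> A" using assms(1) unfolding subring_def by blast
    have "x ^ q + y ^ q \<in> ?J" using iJ \<open>x \<in> ?K\<close> \<open>y \<in> ?K\<close>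
      unfolding ideal_of_def by blast
    then show "x + y \<in> ?K" using xy frob_pow_dream[OF assms(3)] assms(4) by simp
  next
    fix a x assume "a \<in> A" "x \<in> ?K"
    hence ax: "a * x \<in> A" using assms(1) unfolding subring_def by blast
    have "a ^ q * x ^ q \<in> ?J" using iJ subring_power[OF assms(1) \<open>a \<in> A\<close>] \<open>x \<in> ?K\<close>
      unfolding ideal_of_def by blast
    then show "a * x \<in> ?K" using ax by (simp add: power_mult_distrib)
  qed
  moreover have "I \<subseteq> ?K"
  proof
    fix x assume "x \<in> I"
    hence "x ^ q \<in> (\<lambda>x. x ^ q) ` I" by blast
    hence "x ^ q \<in> ?J" by (rule subsetD[OF gen_ideal_sup])
    then show "x \<in> ?K" using \<open>x \<in> I\<close> assms(2) by blast
  qed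
  ultimately have "gen_ideal A I \<subseteq> ?K" by (rule gen_ideal_min)
  hence "(\<lambda>x. x ^ q) ` gen_ideal A I \<subseteq> ?J" by auto
  then show ?thesis unfolding frob_power_def by (rule gen_ideal_min[OF iJ])
qed


lemma tc_ideal:
  fixes A I :: "'k::field set"
  assumes "subring A" "I \<subseteq> A" "prime CHAR('k)" "p = CHAR('k)"
  shows "ideal_of A (tight_closure A p I)"
proof -
  have FI: "\<And>e. ideal_of A (frob_power A (p ^ e) I)"
    unfolding frob_power_def using assms(1,2) subring_power[OF assms(1)]
    by (intro gen_ideal_ideal) auto
  have qpos: "\<And>e. p ^ e > 0" using assms(3,4) prime_gt_0_nat by simp
  show ?thesis unfolding ideal_of_def tc_alt[OF assms(1)]
  proof (intro conjI ballI)
    show "0 \<in> {z \<in> A. \<exists>c\<in>A. c \<noteq> 0 \<and> (\<exists>e0. \<forall>e\<ge>e0. c * z ^ p ^ e \<in> frob_power A (p ^ e) I)}"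
    proof -
      have "\<And>e. (0::'k) ^ (p ^ e) = 0" using qpos by simp
      have H: "\<forall>e\<ge>0. 1 * (0::'k) ^ p ^ e \<in> frob_power A (p ^ e) I"
      proof (intro allI impI)
        fix e :: nat
        have p0: "p > 0" using assms(3,4) prime_gt_0_nat by simp
        show "1 * (0::'k) ^ p ^ e \<in> frob_power A (p ^ e) I" using ideal_zero[OF FI[of e]] p0 by (simp add: power_0_left)
      qed
      have Z: "(0::'k) \<in> A" "(1::'k) \<in> A" using assms(1) unfolding subring_def by auto
      show ?thesis
        by (rule CollectI, rule conjI, rule Z(1), rule bexI[of _ 1], rule conjI, simp, rule exI[of _ 0], rule H, rule Z(2))
    qed
  next
    fix x y assume x: "x \<in> {z \<in> A. \<exists>c\<in>A. c \<noteq> 0 \<and> (\<exists>e0. \<forall>e\<ge>e0. c * z ^ p ^ e \<in> frob_power A (p ^ e) I)}"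
      and y: "y \<in> {z \<in> A. \<exists>c\<in>A. c \<noteq> 0 \<and> (\<exists>e0. \<forall>e\<ge>e0. c * z ^ p ^ e \<in> frob_power A (p ^ e) I)}"
    from x obtain c1 e1 where c1: "c1 \<in> A" "c1 \<noteq> 0" "\<And>e. e \<ge> e1 \<Longrightarrow> c1 * x ^ p ^ e \<in> frob_power A (p ^ e) I" by blast
    from y obtain c2 e2 where c2: "c2 \<in> A" "c2 \<noteq> 0" "\<And>e. e \<ge> e2 \<Longrightarrow> c2 * y ^ p ^ e \<in> frob_power A (p ^ e) I" by blast
    have H2: "\<forall>e\<ge>max e1 e2. (c1 * c2) * (x + y) ^ p ^ e \<in> frob_power A (p ^ e) I"
    proof (intro allI impI)
      fix e assume "max e1 e2 \<le> e"
      hence a: "c1 * x ^ p ^ e \<in> frob_power A (p ^ e) I" "c2 * y ^ p ^ e \<in> frob_power A (p ^ e) I"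
        using c1 c2 by auto
      have "(c1 * c2) * (x + y) ^ p ^ e = c2 * (c1 * x ^ p ^ e) + c1 * (c2 * y ^ p ^ e)"
        using frob_pow_dream[OF assms(3)] assms(4) by (simp add: algebra_simps)
      then show "(c1 * c2) * (x + y) ^ p ^ e \<in> frob_power A (p ^ e) I"
        using a FI[of e] c1 c2 unfolding ideal_of_def by simp
    qed
    have Z: "x + y \<in> A" "c1 * c2 \<in> A" using x y c1 c2 assms(1) unfolding subring_def by auto
    have Z2: "c1 * c2 \<noteq> 0" using c1 c2 by simp
    show "x + y \<in> {z \<in> A. \<exists>c\<in>A. c \<noteq> 0 \<and> (\<exists>e0. \<forall>e\<ge>e0. c * z ^ p ^ e \<in> frob_power A (p ^ e) I)}"
      by (rule CollectI, rule conjI, rule Z(1), rule bexI[of _ "c1*c2"], rule conjI, rule Z2, rule exI, rule H2, rule Z(2))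
  next
    fix a x assume a: "a \<in> A" and x: "x \<in> {z \<in> A. \<exists>c\<in>A. c \<noteq> 0 \<and> (\<exists>e0. \<forall>e\<ge>e0. c * z ^ p ^ e \<in> frob_power A (p ^ e) I)}"
    from x obtain c1 e1 where c1: "c1 \<in> A" "c1 \<noteq> 0" "\<And>e. e \<ge> e1 \<Longrightarrow> c1 * x ^ p ^ e \<in> frob_power A (p ^ e) I" by blast
    have H3: "\<forall>e\<ge>e1. c1 * (a * x) ^ p ^ e \<in> frob_power A (p ^ e) I"
    proof (intro allI impI)
      fix e assume "e1 \<le> e"
      hence "c1 * x ^ p ^ e \<in> frob_power A (p ^ e) I" using c1 by auto
      hence m: "a ^ p ^ e * (c1 * x ^ p ^ e) \<in> frob_power A (p ^ e) I"
        using FI[of e] subring_power[OF assms(1) a] unfolding ideal_of_def by blast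
      have eq: "c1 * (a * x) ^ p ^ e = a ^ p ^ e * (c1 * x ^ p ^ e)" by (simp add: power_mult_distrib mult_ac)
      show "c1 * (a * x) ^ p ^ e \<in> frob_power A (p ^ e) I" by (subst eq) (rule m)
    qed
    then show "a * x \<in> {z \<in> A. \<exists>c\<in>A. c \<noteq> 0 \<and> (\<exists>e0. \<forall>e\<ge>e0. c * z ^ p ^ e \<in> frob_power A (p ^ e) I)}"
    proof -
      have Z: "a * x \<in> A" using x a assms(1) unfolding subring_def by auto
      show ?thesis by (rule CollectI, rule conjI, rule Z(1), rule bexI[of _ "c1"], rule conjI, rule c1(2), rule exI, rule H3, rule c1(1))
    qed
  qed blast
qed





lemma loc_mem: "a \<in> A \<Longrightarrow> u \<in> U \<Longrightarrow> a / u \<in> localize A U"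
  unfolding localize_def by blast

lemma loc_memE: "z \<in> localize A U \<Longrightarrow> (\<And>a u. a \<in> A \<Longrightarrow> u \<in> U \<Longrightarrow> z = a / u \<Longrightarrow> P) \<Longrightarrow> P"
  unfolding localize_def by blast

lemma loc_subring:
  assumes A: "subring A" and U: "mult_system A U" "0 \<notin> U"
  shows "subring (localize A U)"
proof -
  have U1: "1 \<in> U" and UA: "U \<subseteq> A" and Um: "\<And>u v. u \<in> U \<Longrightarrow> v \<in> U \<Longrightarrow> u * v \<in> U"
    using U unfolding mult_system_def by auto
  have A0: "0 \<in> A" "1 \<in> A" and Aop: "\<And>x y. x \<in> A \<Longrightarrow> y \<in> A \<Longrightarrow> x + y \<in> A \<and> x - y \<in> A \<and> x * y \<in> A"
    using A unfolding subring_def by auto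
  show ?thesis unfolding subring_def
  proof (intro conjI ballI)
    show "0 \<in> localize A U" using loc_mem[OF A0(1) U1] by simp
    show "1 \<in> localize A U" using loc_mem[OF A0(2) U1] by simp
  next
    fix x y assume x: "x \<in> localize A U" and y: "y \<in> localize A U"
    from x obtain a u where a: "a \<in> A" "u \<in> U" "x = a / u" by (rule loc_memE)
    from y obtain b v where b: "b \<in> A" "v \<in> U" "y = b / v" by (rule loc_memE)
    have u0: "u \<noteq> 0" "v \<noteq> 0" using a b U(2) by auto
    have uA: "u \<in> A" "v \<in> A" using a b UA by auto
    have uv: "u * v \<in> U" using Um a b by auto
    have "x + y = (a * v + b * u) / (u * v)" using u0 a b by (simp add: field_simps)
    moreover have "a * v + b * u \<in> A" using Aop a b uA by blast
    ultimately show "x + y \<in> localize A U" using loc_mem uv by metis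
    have "x - y = (a * v - b * u) / (u * v)" using u0 a b by (simp add: field_simps)
    moreover have "a * v - b * u \<in> A" using Aop a b uA by blast
    ultimately show "x - y \<in> localize A U" using loc_mem uv by metis
    have "x * y = (a * b) / (u * v)" using u0 a b by (simp add: field_simps)
    moreover have "a * b \<in> A" using Aop a b uA by blast
    ultimately show "x * y \<in> localize A U" using loc_mem uv by metis
  qed
qed

lemma sub_loc: "mult_system A U \<Longrightarrow> A \<subseteq> localize A U"
proof
  fix a assume "mult_system A U" "a \<in> A"
  then show "a \<in> localize A U" using loc_mem[of a A 1 U] unfolding mult_system_def by simp
qed

lemma loc_mono: "A \<subseteq> B \<Longrightarrow> localize A U \<subseteq> localize B U"
  unfolding localize_def by blast

lemma loc_gen:
  assumes A: "subring A" and U: "mult_system A U" "0 \<notin> U" and X: "X \<subseteq> A"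
  shows "gen_ideal (localize A U) X \<subseteq> {y / u | y u. y \<in> gen_ideal A X \<and> u \<in> U}"
proof (rule gen_ideal_min)
  have U1: "1 \<in> U" and UA: "U \<subseteq> A" and Um: "\<And>u v. u \<in> U \<Longrightarrow> v \<in> U \<Longrightarrow> u * v \<in> U"
    using U unfolding mult_system_def by auto
  have J: "ideal_of A (gen_ideal A X)" using gen_ideal_ideal[OF A X] .
  show "X \<subseteq> {y / u | y u. y \<in> gen_ideal A X \<and> u \<in> U}"
  proof
    fix x assume "x \<in> X"
    hence "x \<in> gen_ideal A X" by (rule subsetD[OF gen_ideal_sup])
    moreover have "x = x / 1" by simp
    ultimately show "x \<in> {y / u | y u. y \<in> gen_ideal A X \<and> u \<in> U}" using U1 by blast
  qed
  show "ideal_of (localize A U) {y / u | y u. y \<in> gen_ideal A X \<and> u \<in> U}"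
  proof (rule ideal_ofI)
    show "{y / u | y u. y \<in> gen_ideal A X \<and> u \<in> U} \<subseteq> localize A U"
      using J unfolding ideal_of_def localize_def by blast
    have "(0::'a) = 0 / 1" by simp
    then show "0 \<in> {y / u | y u. y \<in> gen_ideal A X \<and> u \<in> U}" using U1 ideal_zero[OF J] by blast
  next
    fix x y assume x: "x \<in> {y / u | y u. y \<in> gen_ideal A X \<and> u \<in> U}"
      and y: "y \<in> {y / u | y u. y \<in> gen_ideal A X \<and> u \<in> U}"
    from x obtain a u where a: "a \<in> gen_ideal A X" "u \<in> U" "x = a / u" by blast
    from y obtain b v where b: "b \<in> gen_ideal A X" "v \<in> U" "y = b / v" by blast
    have u0: "u \<noteq> 0" "v \<noteq> 0" using a b U(2) by auto
    have uA: "u \<in> A" "v \<in> A" using a b UA by auto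
    have uv: "u * v \<in> U" using Um a b by auto
    have "x + y = (v * a + u * b) / (u * v)" using u0 a b by (simp add: field_simps)
    moreover have "v * a + u * b \<in> gen_ideal A X" using J a b uA unfolding ideal_of_def by blast
    ultimately show "x + y \<in> {y / u | y u. y \<in> gen_ideal A X \<and> u \<in> U}" using uv by blast
  next
    fix c x assume c: "c \<in> localize A U" and x: "x \<in> {y / u | y u. y \<in> gen_ideal A X \<and> u \<in> U}"
    from x obtain a u where a: "a \<in> gen_ideal A X" "u \<in> U" "x = a / u" by blast
    from c obtain b v where b: "b \<in> A" "v \<in> U" "c = b / v" by (rule loc_memE)
    have u0: "u \<noteq> 0" "v \<noteq> 0" using a b U(2) by auto
    have uv: "v * u \<in> U" using Um a b by auto
    have "c * x = (b * a) / (v * u)" unfolding a(3) b(3) using u0 by (simp add: field_simps)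
    moreover have "b * a \<in> gen_ideal A X" using J a b unfolding ideal_of_def by blast
    ultimately show "c * x \<in> {y / u | y u. y \<in> gen_ideal A X \<and> u \<in> U}" using uv by blast
  qed
qed

lemma loc_gen2:
  assumes A: "subring A" and U: "mult_system A U" "0 \<notin> U" and X: "X \<subseteq> A"
    and y: "y \<in> gen_ideal A X" and u: "u \<in> U"
  shows "y / u \<in> gen_ideal (localize A U) X"
proof -
  have LS: "subring (localize A U)" using loc_subring[OF A U] .
  have AL: "A \<subseteq> localize A U" using sub_loc[OF U(1)] .
  have "gen_ideal A X \<subseteq> gen_ideal (localize A U) X"
    using gen_ideal_mono2[OF A LS AL X order.refl] X AL by blast
  hence y': "y \<in> gen_ideal (localize A U) X" using y by blast
  have "1 / u \<in> localize A U" using loc_mem[of 1 A u U] A u unfolding subring_def by blast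
  moreover have "ideal_of (localize A U) (gen_ideal (localize A U) X)"
    using gen_ideal_ideal[OF LS] X AL by blast
  ultimately have "(1 / u) * y \<in> gen_ideal (localize A U) X" using y' unfolding ideal_of_def by blast
  then show ?thesis by simp
qed




definition rspan :: "'k::field set \<Rightarrow> 'k set \<Rightarrow> 'k set" where
  "rspan R F = {\<Sum>f\<in>F. r f * f | r. \<forall>f\<in>F. r f \<in> R}"

definition rlin :: "'k::field set \<Rightarrow> 'k set \<Rightarrow> ('k \<Rightarrow> 'k) \<Rightarrow> bool" where
  "rlin R M \<phi> \<longleftrightarrow> (\<forall>s\<in>M. \<phi> s \<in> R) \<and> (\<forall>s\<in>M. \<forall>t\<in>M. \<phi> (s + t) = \<phi> s + \<phi> t) \<and>
     (\<forall>r\<in>R. \<forall>s\<in>M. \<phi> (r * s) = r * \<phi> s)"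

lemma rspanI: "\<forall>f\<in>F. r f \<in> R \<Longrightarrow> (\<Sum>f\<in>F. r f * f) \<in> rspan R F"
  unfolding rspan_def by blast

lemma rspan_empty: "rspan R {} = {0}"
  unfolding rspan_def by auto

lemma rspan_insert:
  assumes "finite G" "f \<notin> G"
  shows "rspan R (insert f G) = {g + a * f | g a. g \<in> rspan R G \<and> a \<in> R}"
proof
  show "rspan R (insert f G) \<subseteq> {g + a * f | g a. g \<in> rspan R G \<and> a \<in> R}"
  proof
    fix m assume "m \<in> rspan R (insert f G)"
    then obtain r where r: "\<forall>f\<in>insert f G. r f \<in> R" "m = (\<Sum>f\<in>insert f G. r f * f)"
      unfolding rspan_def by blast
    have "m = (\<Sum>f\<in>G. r f * f) + r f * f" using r(2) assms by (simp add: add.commute)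
    moreover have "(\<Sum>f\<in>G. r f * f) \<in> rspan R G" using r(1) unfolding rspan_def by blast
    ultimately show "m \<in> {g + a * f | g a. g \<in> rspan R G \<and> a \<in> R}" using r(1) by blast
  qed
  show "{g + a * f | g a. g \<in> rspan R G \<and> a \<in> R} \<subseteq> rspan R (insert f G)"
  proof
    fix m assume "m \<in> {g + a * f | g a. g \<in> rspan R G \<and> a \<in> R}"
    then obtain g a where ga: "g \<in> rspan R G" "a \<in> R" "m = g + a * f" by blast
    from ga(1) obtain r where r: "\<forall>f\<in>G. r f \<in> R" "g = (\<Sum>f\<in>G. r f * f)"
      unfolding rspan_def by auto
    let ?r = "r(f := a)"
    have "(\<Sum>x\<in>G. ?r x * x) = (\<Sum>x\<in>G. r x * x)"
    proof (rule sum.cong[OF refl])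
      fix x assume "x \<in> G" hence "x \<noteq> f" using assms(2) by blast
      then show "?r x * x = r x * x" by simp
    qed
    hence "(\<Sum>x\<in>G. ?r x * x) = g" using r(2) by simp
    hence "(\<Sum>f\<in>insert f G. ?r f * f) = m" using assms ga(3) by (simp add: add.commute)
    moreover have "\<forall>f\<in>insert f G. ?r f \<in> R" using r(1) ga(2) by auto
    ultimately show "m \<in> rspan R (insert f G)" unfolding rspan_def by blast
  qed
qed

lemma rspan_add:
  assumes R: "subring R" and s: "s \<in> rspan R F" and t: "t \<in> rspan R F"
  shows "s + t \<in> rspan R F"
proof -
  obtain r1 where r1: "\<forall>f\<in>F. r1 f \<in> R" "s = (\<Sum>f\<in>F. r1 f * f)" using s unfolding rspan_def by blast
  obtain r2 where r2: "\<forall>f\<in>F. r2 f \<in> R" "t = (\<Sum>f\<in>F. r2 f * f)" using t unfolding rspan_def by blast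
  have "s + t = (\<Sum>f\<in>F. (r1 f + r2 f) * f)" using r1 r2 by (simp add: sum.distrib distrib_right)
  moreover have "\<forall>f\<in>F. r1 f + r2 f \<in> R" using r1 r2 R unfolding subring_def by blast
  ultimately show ?thesis using rspanI[of F "\<lambda>f. r1 f + r2 f" R] by simp
qed

lemma rspan_smult:
  assumes R: "subring R" and a: "a \<in> R" and s: "s \<in> rspan R F"
  shows "a * s \<in> rspan R F"
proof -
  obtain r1 where r1: "\<forall>f\<in>F. r1 f \<in> R" "s = (\<Sum>f\<in>F. r1 f * f)" using s unfolding rspan_def by blast
  have "a * s = (\<Sum>f\<in>F. (a * r1 f) * f)" using r1 by (simp add: sum_distrib_left mult.assoc)
  moreover have "\<forall>f\<in>F. a * r1 f \<in> R" using r1 R a unfolding subring_def by blast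
  ultimately show ?thesis using rspanI[of F "\<lambda>f. a * r1 f" R] by simp
qed

lemma rspan_diff:
  assumes R: "subring R" and s: "s \<in> rspan R F" and t: "t \<in> rspan R F"
  shows "s - t \<in> rspan R F"
proof -
  have "-1 \<in> R" using R unfolding subring_def by (metis diff_0)
  hence "(-1) * t \<in> rspan R F" using rspan_smult[OF R _ t] by blast
  hence "s + (-1) * t \<in> rspan R F" using rspan_add[OF R s] by blast
  then show ?thesis by simp
qed




lemma functional_step:
  assumes R: "subring R" and G: "finite G" "f \<notin> G"
    and IH: "\<forall>c\<in>rspan R G. c \<noteq> 0 \<longrightarrow> (\<exists>\<psi>. rlin R (rspan R G) \<psi> \<and> \<psi> c \<noteq> 0)"
    and c: "c \<in> rspan R (insert f G)" "c \<noteq> 0"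
  shows "\<exists>\<phi>. rlin R (rspan R (insert f G)) \<phi> \<and> \<phi> c \<noteq> 0"
proof -
  let ?M = "rspan R (insert f G)" and ?N = "rspan R G"
  have Mdec: "\<And>m. m \<in> ?M \<Longrightarrow> \<exists>g a. g \<in> ?N \<and> a \<in> R \<and> m = g + a * f"
    using rspan_insert[OF G] by blast
  have NM: "?N \<subseteq> ?M"
  proof
    fix g assume "g \<in> ?N"
    moreover have "0 \<in> R" using R unfolding subring_def by blast
    ultimately show "g \<in> ?M" using rspan_insert[OF G, of R] by force
  qed
  have Rop: "\<And>x y. x \<in> R \<Longrightarrow> y \<in> R \<Longrightarrow> x + y \<in> R \<and> x - y \<in> R \<and> x * y \<in> R"
    using R unfolding subring_def by blast
  show ?thesis
  proof (cases "\<exists>r\<in>R. r \<noteq> 0 \<and> r * f \<in> ?N")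
    case True
    then obtain r where r: "r \<in> R" "r \<noteq> 0" "r * f \<in> ?N" by blast
    have rM: "\<And>m. m \<in> ?M \<Longrightarrow> r * m \<in> ?N"
    proof -
      fix m assume "m \<in> ?M"
      then obtain g a where ga: "g \<in> ?N" "a \<in> R" "m = g + a * f" using Mdec by blast
      have "r * m = r * g + a * (r * f)" using ga(3) by (simp add: algebra_simps)
      moreover have "r * g \<in> ?N" using rspan_smult[OF R r(1) ga(1)] .
      moreover have "a * (r * f) \<in> ?N" using rspan_smult[OF R ga(2) r(3)] .
      ultimately show "r * m \<in> ?N" using rspan_add[OF R] by simp
    qed
    have "r * c \<in> ?N" "r * c \<noteq> 0" using rM c r by auto
    then obtain \<psi> where psi: "rlin R ?N \<psi>" "\<psi> (r * c) \<noteq> 0" using IH by blast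
    have "rlin R ?M (\<lambda>m. \<psi> (r * m))"
      unfolding rlin_def
    proof (intro conjI ballI)
      fix s assume s: "s \<in> ?M"
      show "\<psi> (r * s) \<in> R" using psi(1) rM[OF s] unfolding rlin_def by blast
      fix t assume t: "t \<in> ?M"
      have "\<psi> (r * s + r * t) = \<psi> (r * s) + \<psi> (r * t)"
        using psi(1) rM[OF s] rM[OF t] unfolding rlin_def by blast
      then show "\<psi> (r * (s + t)) = \<psi> (r * s) + \<psi> (r * t)" by (simp add: distrib_left)
    next
      fix a s assume a: "a \<in> R" and s: "s \<in> ?M"
      have "\<psi> (a * (r * s)) = a * \<psi> (r * s)"
        using psi(1) rM[OF s] a unfolding rlin_def by blast
      then show "\<psi> (r * (a * s)) = a * \<psi> (r * s)" by (simp add: mult.left_commute)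
    qed
    then show ?thesis using psi(2) by blast
  next
    case False
    have uniq: "\<And>g g' a a'. g \<in> ?N \<Longrightarrow> g' \<in> ?N \<Longrightarrow> a \<in> R \<Longrightarrow> a' \<in> R \<Longrightarrow>
        g + a * f = g' + a' * f \<Longrightarrow> a = a'"
    proof -
      fix g g' a a' assume h: "g \<in> ?N" "g' \<in> ?N" "a \<in> R" "a' \<in> R" "g + a * f = g' + a' * f"
      have "(a - a') * f = g' - g" using h(5) by (simp add: algebra_simps)
      moreover have "g' - g \<in> ?N" using rspan_diff[OF R h(2) h(1)] .
      moreover have "a - a' \<in> R" using Rop h(3,4) by blast
      ultimately show "a = a'" using False by auto
    qed
    define co where "co m = (SOME a. a \<in> R \<and> m - a * f \<in> ?N)" for m
    have co: "\<And>m. m \<in> ?M \<Longrightarrow> co m \<in> R \<and> m - co m * f \<in> ?N"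
    proof -
      fix m assume "m \<in> ?M"
      then obtain g a where ga: "g \<in> ?N" "a \<in> R" "m = g + a * f" using Mdec by blast
      hence "a \<in> R \<and> m - a * f \<in> ?N" by simp
      then show "co m \<in> R \<and> m - co m * f \<in> ?N" unfolding co_def by (rule someI)
    qed
    have co_eq: "\<And>m a. m \<in> ?M \<Longrightarrow> a \<in> R \<Longrightarrow> m - a * f \<in> ?N \<Longrightarrow> co m = a"
    proof -
      fix m a assume h: "m \<in> ?M" "a \<in> R" "m - a * f \<in> ?N"
      have "(m - co m * f) + co m * f = (m - a * f) + a * f" by simp
      then show "co m = a" using uniq[OF _ h(3) _ h(2)] co[OF h(1)] by blast
    qed
    have co_add: "\<And>s t. s \<in> ?M \<Longrightarrow> t \<in> ?M \<Longrightarrow> co (s + t) = co s + co t"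
    proof -
      fix s t assume s: "s \<in> ?M" and t: "t \<in> ?M"
      have e: "(s + t) - (co s + co t) * f = (s - co s * f) + (t - co t * f)" by (simp add: algebra_simps)
      have "(s - co s * f) + (t - co t * f) \<in> ?N" using rspan_add[OF R] co[OF s] co[OF t] by blast
      hence "(s + t) - (co s + co t) * f \<in> ?N" by (subst e)
      moreover have "co s + co t \<in> R" using Rop co[OF s] co[OF t] by blast
      ultimately show "co (s + t) = co s + co t" using co_eq rspan_add[OF R s t] by blast
    qed
    have co_mult: "\<And>a s. a \<in> R \<Longrightarrow> s \<in> ?M \<Longrightarrow> co (a * s) = a * co s"
    proof -
      fix a s assume a: "a \<in> R" and s: "s \<in> ?M"
      have e: "(a * s) - (a * co s) * f = a * (s - co s * f)" by (simp add: algebra_simps)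
      have "a * (s - co s * f) \<in> ?N" using rspan_smult[OF R a] co[OF s] by blast
      hence "(a * s) - (a * co s) * f \<in> ?N" by (subst e)
      moreover have "a * co s \<in> R" using Rop co[OF s] a by blast
      ultimately show "co (a * s) = a * co s" using co_eq rspan_smult[OF R a s] by blast
    qed
    show ?thesis
    proof (cases "co c = 0")
      case False
      have "rlin R ?M co" unfolding rlin_def using co co_add co_mult by blast
      then show ?thesis using False by blast
    next
      case True
      hence "c \<in> ?N" using co[OF c(1)] by simp
      then obtain \<psi> where psi: "rlin R ?N \<psi>" "\<psi> c \<noteq> 0" using IH c(2) by blast
      have "rlin R ?M (\<lambda>m. \<psi> (m - co m * f))"
        unfolding rlin_def
      proof (intro conjI ballI)
        fix s assume s: "s \<in> ?M"
        show "\<psi> (s - co s * f) \<in> R" using psi(1) co[OF s] unfolding rlin_def by blast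
        fix t assume t: "t \<in> ?M"
        have "\<psi> ((s - co s * f) + (t - co t * f)) = \<psi> (s - co s * f) + \<psi> (t - co t * f)"
          using psi(1) co[OF s] co[OF t] unfolding rlin_def by blast
        moreover have e: "(s + t) - co (s + t) * f = (s - co s * f) + (t - co t * f)"
          using co_add[OF s t] by (simp add: algebra_simps)
        ultimately show "\<psi> ((s + t) - co (s + t) * f) = \<psi> (s - co s * f) + \<psi> (t - co t * f)" by (simp only: e)
      next
        fix a s assume a: "a \<in> R" and s: "s \<in> ?M"
        have "\<psi> (a * (s - co s * f)) = a * \<psi> (s - co s * f)"
          using psi(1) co[OF s] a unfolding rlin_def by blast
        moreover have e: "a * s - co (a * s) * f = a * (s - co s * f)"
          using co_mult[OF a s] by (simp add: algebra_simps)
        ultimately show "\<psi> (a * s - co (a * s) * f) = a * \<psi> (s - co s * f)" by (simp only: e)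
      qed
      moreover have "\<psi> (c - co c * f) \<noteq> 0" using True psi(2) by simp
      ultimately show ?thesis by blast
    qed
  qed
qed

lemma functional_exists:
  assumes R: "subring R" and F: "finite F"
  shows "\<forall>c\<in>rspan R F. c \<noteq> 0 \<longrightarrow> (\<exists>\<phi>. rlin R (rspan R F) \<phi> \<and> \<phi> c \<noteq> 0)"
  using F
proof (induction F rule: finite_induct)
  case empty
  then show ?case by (simp add: rspan_empty)
next
  case (insert f G)
  then show ?case using functional_step[OF R insert(1,2) insert(3)] by blast
qed




lemma contraction:
  fixes R S I :: "'k::field set"
  assumes R: "subring R" and S: "subring S" and RS: "R \<subseteq> S"
    and fm: "finite_module_over R S" and I: "I \<subseteq> R"
    and ch: "prime CHAR('k)" and p: "p = CHAR('k)"
    and x: "x \<in> R" "x \<in> tight_closure S p (gen_ideal S I)"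
  shows "x \<in> tight_closure R p I"
proof -
  obtain F where F: "finite F" "S = rspan R F"
    using fm unfolding finite_module_over_def rspan_def by blast
  have IS: "I \<subseteq> S" using I RS by blast
  obtain c e0 where c: "c \<in> S" "c \<noteq> 0" "\<And>e. e \<ge> e0 \<Longrightarrow> c * x ^ (p ^ e) \<in> frob_power S (p ^ e) (gen_ideal S I)"
    using x(2) unfolding tc_alt[OF S] by blast
  obtain \<phi> where phi: "rlin R S \<phi>" "\<phi> c \<noteq> 0"
    using functional_exists[OF R F(1)] c(1,2) F(2) by blast
  have phiR: "\<And>s. s \<in> S \<Longrightarrow> \<phi> s \<in> R" using phi(1) unfolding rlin_def by blast
  have phiadd: "\<And>s t. s \<in> S \<Longrightarrow> t \<in> S \<Longrightarrow> \<phi> (s + t) = \<phi> s + \<phi> t" using phi(1) unfolding rlin_def by blast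
  have phimult: "\<And>r s. r \<in> R \<Longrightarrow> s \<in> S \<Longrightarrow> \<phi> (r * s) = r * \<phi> s" using phi(1) unfolding rlin_def by blast
  have S0: "0 \<in> S" "1 \<in> S" and R0: "0 \<in> R" using S R unfolding subring_def by auto
  have Smul: "\<And>a b. a \<in> S \<Longrightarrow> b \<in> S \<Longrightarrow> a * b \<in> S" and Sadd: "\<And>a b. a \<in> S \<Longrightarrow> b \<in> S \<Longrightarrow> a + b \<in> S"
    using S unfolding subring_def by auto
  have phi0: "\<phi> 0 = 0" using phimult[OF R0 S0(1)] by simp
  have key: "\<And>q y. y \<in> gen_ideal S ((\<lambda>y. y ^ q) ` I) \<Longrightarrow> \<phi> y \<in> gen_ideal R ((\<lambda>y. y ^ q) ` I)"
  proof -
    fix q :: nat and y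
    assume y: "y \<in> gen_ideal S ((\<lambda>y. y ^ q) ` I)"
    let ?J = "(\<lambda>y. y ^ q) ` I"
    have JR: "?J \<subseteq> R" using I subring_power[OF R] by blast
    have iJ: "ideal_of R (gen_ideal R ?J)" using gen_ideal_ideal[OF R JR] .
    let ?K = "{s \<in> S. \<forall>t\<in>S. \<phi> (t * s) \<in> gen_ideal R ?J}"
    have "ideal_of S ?K"
    proof (rule ideal_ofI)
      show "?K \<subseteq> S" by blast
      show "0 \<in> ?K" using S0 phi0 ideal_zero[OF iJ] by simp
    next
      fix s1 s2 assume s1: "s1 \<in> ?K" and s2: "s2 \<in> ?K"
      show "s1 + s2 \<in> ?K"
      proof (intro CollectI conjI ballI)
        show "s1 + s2 \<in> S" using s1 s2 Sadd by blast
        fix t assume t: "t \<in> S"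
        have "\<phi> (t * (s1 + s2)) = \<phi> (t * s1) + \<phi> (t * s2)"
          using phiadd[OF Smul[OF t] Smul[OF t]] s1 s2 by (simp add: distrib_left)
        moreover have "\<phi> (t * s1) \<in> gen_ideal R ?J" "\<phi> (t * s2) \<in> gen_ideal R ?J" using s1 s2 t by auto
        ultimately show "\<phi> (t * (s1 + s2)) \<in> gen_ideal R ?J" using iJ unfolding ideal_of_def by simp
      qed
    next
      fix a s assume a: "a \<in> S" and s: "s \<in> ?K"
      show "a * s \<in> ?K"
      proof (intro CollectI conjI ballI)
        show "a * s \<in> S" using a s Smul by blast
        fix t assume t: "t \<in> S"
        have "t * a \<in> S" using Smul t a by blast
        hence "\<phi> ((t * a) * s) \<in> gen_ideal R ?J" using s by blast
        then show "\<phi> (t * (a * s)) \<in> gen_ideal R ?J" by (simp add: mult.assoc)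
      qed
    qed
    moreover have "?J \<subseteq> ?K"
    proof
      fix j assume j: "j \<in> ?J"
      have jR: "j \<in> R" using j JR by blast
      show "j \<in> ?K"
      proof (intro CollectI conjI ballI)
        show "j \<in> S" using jR RS by blast
        fix t assume t: "t \<in> S"
        have "\<phi> (t * j) = j * \<phi> t" using phimult[OF jR t] by (simp add: mult.commute)
        moreover have "j \<in> gen_ideal R ?J" using j by (rule subsetD[OF gen_ideal_sup])
        moreover have "\<phi> t \<in> R" using phiR[OF t] .
        ultimately show "\<phi> (t * j) \<in> gen_ideal R ?J" using iJ unfolding ideal_of_def
          by (metis mult.commute)
      qed
    qed
    ultimately have "gen_ideal S ?J \<subseteq> ?K" by (rule gen_ideal_min)
    hence "y \<in> ?K" using y by blast
    hence "\<phi> (1 * y) \<in> gen_ideal R ?J" using S0 by blast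
    then show "\<phi> y \<in> gen_ideal R ?J" by simp
  qed
  have "\<forall>e\<ge>e0. \<phi> c * x ^ (p ^ e) \<in> frob_power R (p ^ e) I"
  proof (intro allI impI)
    fix e assume "e0 \<le> e"
    hence "c * x ^ (p ^ e) \<in> frob_power S (p ^ e) (gen_ideal S I)" using c by blast
    hence "c * x ^ (p ^ e) \<in> gen_ideal S ((\<lambda>y. y ^ (p ^ e)) ` I)"
      using frob_gen[OF S IS ch] p by blast
    hence "\<phi> (x ^ (p ^ e) * c) \<in> gen_ideal R ((\<lambda>y. y ^ (p ^ e)) ` I)" using key by (simp add: mult.commute)
    moreover have "\<phi> (x ^ (p ^ e) * c) = x ^ (p ^ e) * \<phi> c"
      using phimult[OF subring_power[OF R x(1)] c(1)] .
    ultimately show "\<phi> c * x ^ (p ^ e) \<in> frob_power R (p ^ e) I"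
      unfolding frob_power_def by (simp add: mult.commute)
  qed
  moreover have "\<phi> c \<in> R" using phiR[OF c(1)] .
  ultimately show ?thesis unfolding tc_alt[OF R] using x(1) phi(2) by blast
qed




theorem lemma2:
  fixes R S :: "'k::field set" and p :: nat
  assumes "prime p" and "CHAR('k) = p"
    and "subring R" and "subring S" and "R \<subseteq> S"
    and "noetherian R"
    and "finite_module_over R S"
    and "tc_commutes_loc S p"
  shows "tc_commutes_loc R p"
  unfolding tc_commutes_loc_def
proof (intro allI impI)
  fix I U assume IU: "ideal_of R I \<and> mult_system R U \<and> 0 \<notin> U"
  have R: "subring R" and S: "subring S" and RS: "R \<subseteq> S" using assms by auto
  have ch: "prime CHAR('k)" and p: "p = CHAR('k)" using assms by auto
  have I: "I \<subseteq> R" using IU unfolding ideal_of_def by blast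
  have U: "mult_system R U" "0 \<notin> U" using IU by auto
  have US: "mult_system S U" using U(1) RS unfolding mult_system_def by auto
  have UR: "U \<subseteq> R" and Um: "\<And>u v. u \<in> U \<Longrightarrow> v \<in> U \<Longrightarrow> u * v \<in> U"
    using U(1) unfolding mult_system_def by auto
  let ?RU = "localize R U" and ?SU = "localize S U"
  have RU: "subring ?RU" using loc_subring[OF R U] .
  have SU: "subring ?SU" using loc_subring[OF S US U(2)] .
  have R_RU: "R \<subseteq> ?RU" using sub_loc[OF U(1)] .
  have S_SU: "S \<subseteq> ?SU" using sub_loc[OF US] .
  have RU_SU: "?RU \<subseteq> ?SU" using loc_mono[OF RS] .
  let ?T = "tight_closure ?RU p (gen_ideal ?RU I)"
  let ?TR = "tight_closure R p I"
  have IRU: "I \<subseteq> ?RU" using I R_RU by blast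
  have gRU: "ideal_of ?RU (gen_ideal ?RU I)" using gen_ideal_ideal[OF RU IRU] .
  have gRU_sub: "gen_ideal ?RU I \<subseteq> ?RU" using gRU unfolding ideal_of_def by blast
  have TR_R: "?TR \<subseteq> R" unfolding tc_alt[OF R] by blast
  show "gen_ideal ?RU ?TR = ?T"
  proof
    show "gen_ideal ?RU ?TR \<subseteq> ?T"
    proof (rule gen_ideal_min)
      show "ideal_of ?RU ?T" using tc_ideal[OF RU gRU_sub ch p] .
      show "?TR \<subseteq> ?T"
      proof
        fix z assume z: "z \<in> ?TR"
        then obtain c e0 where c: "z \<in> R" "c \<in> R" "c \<noteq> 0" "\<And>e. e \<ge> e0 \<Longrightarrow> c * z ^ (p ^ e) \<in> frob_power R (p ^ e) I"
          unfolding tc_alt[OF R] by blast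
        have "\<forall>e\<ge>e0. c * z ^ (p ^ e) \<in> frob_power ?RU (p ^ e) (gen_ideal ?RU I)"
        proof (intro allI impI)
          fix e assume "e0 \<le> e"
          hence h: "c * z ^ (p ^ e) \<in> frob_power R (p ^ e) I" using c by blast
          have "(\<lambda>x. x ^ (p ^ e)) ` I \<subseteq> R" using I subring_power[OF R] by blast
          moreover have "(\<lambda>x. x ^ (p ^ e)) ` I \<subseteq> (\<lambda>x. x ^ (p ^ e)) ` gen_ideal ?RU I"
            by (rule image_mono[OF gen_ideal_sup])
          moreover have "(\<lambda>x. x ^ (p ^ e)) ` gen_ideal ?RU I \<subseteq> ?RU"
            using gRU_sub subring_power[OF RU] by blast
          ultimately have "frob_power R (p ^ e) I \<subseteq> frob_power ?RU (p ^ e) (gen_ideal ?RU I)"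
            unfolding frob_power_def by (rule gen_ideal_mono2[OF R RU R_RU])
          then show "c * z ^ (p ^ e) \<in> frob_power ?RU (p ^ e) (gen_ideal ?RU I)" using h by blast
        qed
        moreover have "z \<in> ?RU" "c \<in> ?RU" using c R_RU by auto
        ultimately show "z \<in> ?T" unfolding tc_alt[OF RU] using c(3) by blast
      qed
    qed
  next
    show "?T \<subseteq> gen_ideal ?RU ?TR"
    proof
      fix z assume z: "z \<in> ?T"
      then obtain c e0 where c: "z \<in> ?RU" "c \<in> ?RU" "c \<noteq> 0"
        "\<And>e. e \<ge> e0 \<Longrightarrow> c * z ^ (p ^ e) \<in> frob_power ?RU (p ^ e) (gen_ideal ?RU I)"
        unfolding tc_alt[OF RU] by blast
      let ?IS = "gen_ideal S I"
      have IS_S: "I \<subseteq> S" using I RS by blast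
      have iIS: "ideal_of S ?IS" using gen_ideal_ideal[OF S IS_S] .
      have IS_sub: "?IS \<subseteq> S" using iIS unfolding ideal_of_def by blast
      have IS_SU: "?IS \<subseteq> ?SU" using IS_sub S_SU by blast
      have gSU: "ideal_of ?SU (gen_ideal ?SU ?IS)" using gen_ideal_ideal[OF SU IS_SU] .
      have gSU_sub: "gen_ideal ?SU ?IS \<subseteq> ?SU" using gSU unfolding ideal_of_def by blast
      have "I \<subseteq> ?IS" by (rule gen_ideal_sup)
      hence g1: "gen_ideal ?RU I \<subseteq> gen_ideal ?SU ?IS"
        using gen_ideal_mono2[OF RU SU RU_SU IRU _ IS_SU] by blast
      have "\<forall>e\<ge>e0. c * z ^ (p ^ e) \<in> frob_power ?SU (p ^ e) (gen_ideal ?SU ?IS)"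
      proof (intro allI impI)
        fix e assume "e0 \<le> e"
        hence h: "c * z ^ (p ^ e) \<in> frob_power ?RU (p ^ e) (gen_ideal ?RU I)" using c by blast
        have "(\<lambda>x. x ^ (p ^ e)) ` gen_ideal ?RU I \<subseteq> ?RU"
          using gRU_sub subring_power[OF RU] by blast
        moreover have "(\<lambda>x. x ^ (p ^ e)) ` gen_ideal ?RU I \<subseteq> (\<lambda>x. x ^ (p ^ e)) ` gen_ideal ?SU ?IS"
          by (rule image_mono[OF g1])
        moreover have "(\<lambda>x. x ^ (p ^ e)) ` gen_ideal ?SU ?IS \<subseteq> ?SU"
          using gSU_sub subring_power[OF SU] by blast
        ultimately have "frob_power ?RU (p ^ e) (gen_ideal ?RU I) \<subseteq> frob_power ?SU (p ^ e) (gen_ideal ?SU ?IS)"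
          unfolding frob_power_def by (rule gen_ideal_mono2[OF RU SU RU_SU])
        then show "c * z ^ (p ^ e) \<in> frob_power ?SU (p ^ e) (gen_ideal ?SU ?IS)" using h by blast
      qed
      moreover have "z \<in> ?SU" "c \<in> ?SU" using c RU_SU by auto
      ultimately have zT: "z \<in> tight_closure ?SU p (gen_ideal ?SU ?IS)"
        unfolding tc_alt[OF SU] using c(3) by blast
      let ?W = "tight_closure S p ?IS"
      have "gen_ideal ?SU ?W = tight_closure ?SU p (gen_ideal ?SU ?IS)"
        using assms(8) iIS US U(2) unfolding tc_commutes_loc_def by blast
      hence zW: "z \<in> gen_ideal ?SU ?W" using zT by simp
      have iW: "ideal_of S ?W" using tc_ideal[OF S IS_sub ch p] .
      have W_S: "?W \<subseteq> S" using iW unfolding ideal_of_def by blast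
      obtain w u where wu: "w \<in> gen_ideal S ?W" "u \<in> U" "z = w / u"
        using loc_gen[OF S US U(2) W_S] zW by blast
      have w: "w \<in> ?W" using wu(1) gen_ideal_of_ideal[OF iW] by simp
      obtain r v where rv: "r \<in> R" "v \<in> U" "z = r / v" using c(1) by (rule loc_memE)
      have u0: "u \<noteq> 0" "v \<noteq> 0" using wu rv U(2) by auto
      have eq: "w * v = r * u" using wu(3) rv(3) u0 by (simp add: field_simps)
      have vS: "v \<in> S" "u \<in> R" using rv(2) wu(2) UR RS by auto
      have "v * w \<in> ?W" using iW vS w unfolding ideal_of_def by blast
      hence wvW: "w * v \<in> ?W" by (simp add: mult.commute)
      have wvR: "w * v \<in> R" using eq rv(1) vS(2) R unfolding subring_def by simp
      have wvT: "w * v \<in> ?TR"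
        using contraction[OF R S RS assms(7) I ch p wvR wvW] .
      have "w * v \<in> gen_ideal R ?TR" using wvT by (rule subsetD[OF gen_ideal_sup])
      hence "(w * v) / (u * v) \<in> gen_ideal ?RU ?TR"
        using loc_gen2[OF R U TR_R] Um[OF wu(2) rv(2)] by blast
      moreover have "(w * v) / (u * v) = z" using wu(3) u0 by simp
      ultimately show "z \<in> gen_ideal ?RU ?TR" by simp
    qed
  qed
qed



end
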